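(* Let $\mu$ be the Borel measure on $\mathbb{R}$ equal to Lebesgue measure on $\mathbb{R}\setminus[0,1)$ and, on $[0,1)$, having constant density on each interval $I_k^b=[2^{-k},2^{-k+1})$, $k\ge1$, with masses determined by $\mu(I_1)=\mu(I_1^b)=\tfrac12$ and, for $k\ge2$, $\mu(I_k)=\frac{k-1}{k}\mu(I_{k-1})$, $\mu(I_k^b)=\frac1k\mu(I_{k-1})$, where $I_k=[0,2^{-k})$. Define $b=\sum_{k=1}^\infty\alpha_kh_{I_k}$ with $\alpha_k=k^{-1/2}\mu(I_k)^{1/2}$. Then $b\in\mathrm{BMO}(\mu)$, but $$\sum_{k=1}^\infty\|\Delta_{I_k}b\|_\infty^2\,\mu(I_k)=+\infty.$$
   Context: $\mathcal{D}$ is the standard dyadic grid on $\mathbb{R}$. For $Q\in\mathcal{D}$: $Q_-,Q_+$ its left/right children, $\widehat Q$ its parent, $\langle f\rangle_Q=\frac1{\mu(Q)}\int_Qf\,d\mu$, $\Delta_Qf=\sum_{R\in\{Q_-,Q_+\}}\langle f\rangle_R\mathbf 1_R-\langle f\rangle_Q\mathbf 1_Q$, $m(Q)=\frac{\mu(Q_+)\mu(Q_-)}{\mu(Q)}$, $h_Q=\sqrt{m(Q)}\big(\frac{\mathbf 1_{Q_+}}{\mu(Q_+)}-\frac{\mathbf 1_{Q_-}}{\mu(Q_-)}\big)$. $b\in\mathrm{BMO}(\mu)$ means $\sup_{Q\in\mathcal{D}}\frac1{\mu(Q)}\int_Q|b-\langle b\rangle_{\widehat Q}|\,d\mu<\infty$.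 $\|\cdot\|_\infty$ is the $L^\infty(\mu)$ norm. *)

theory Defs
  imports "HOL-Analysis.Analysis" "HOL-Probability.Essential_Supremum"
begin

definition dcube :: "int \<Rightarrow> int \<Rightarrow> real set" where
  "dcube n j = {of_int j * 2 powr (of_int n) ..< (of_int j + 1) * 2 powr (of_int n)}"

definition dyadic :: "real set set" where
  "dyadic = {dcube n j | n j. True}"

definition lchild :: "real set \<Rightarrow> real set" where
  "lchild Q = {Inf Q ..< (Inf Q + Sup Q) / 2}"

definition rchild :: "real set \<Rightarrow> real set" where
  "rchild Q = {(Inf Q + Sup Q) / 2 ..< Sup Q}"

definition dparent :: "real set \<Rightarrow> real set" where
  "dparent Q = (let l = 2 * (Sup Q - Inf Q); j = \<lfloor>Inf Q / l\<rfloor>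
                in {of_int j * l ..< (of_int j + 1) * l})"

definition avg :: "real measure \<Rightarrow> (real \<Rightarrow> real) \<Rightarrow> real set \<Rightarrow> real" where
  "avg M f Q = (LINT x:Q|M. f x) / measure M Q"

definition mdiff :: "real measure \<Rightarrow> real set \<Rightarrow> (real \<Rightarrow> real) \<Rightarrow> real \<Rightarrow> real" where
  "mdiff M Q f x = avg M f (lchild Q) * indicator (lchild Q) x
                 + avg M f (rchild Q) * indicator (rchild Q) x
                 - avg M f Q * indicator Q x"

definition mQ :: "real measure \<Rightarrow> real set \<Rightarrow> real" where
  "mQ M Q = measure M (rchild Q) * measure M (lchild Q) / measure M Q"

definition haar :: "real measure \<Rightarrow> real set \<Rightarrow> real \<Rightarrow> real" where
  "haar M Q x = sqrt (mQ M Q) *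
     (indicator (rchild Q) x / measure M (rchild Q) - indicator (lchild Q) x / measure M (lchild Q))"

definition in_BMO :: "real measure \<Rightarrow> (real \<Rightarrow> real) \<Rightarrow> bool" where
  "in_BMO M b \<longleftrightarrow> b \<in> borel_measurable M \<and> (\<forall>Q\<in>dyadic. set_integrable M Q b) \<and>
     (SUP Q\<in>dyadic. (\<integral>\<^sup>+ x\<in>Q. ennreal \<bar>b x - avg M b (dparent Q)\<bar> \<partial>M) / emeasure M Q) < \<infinity>"

definition Linf_norm :: "real measure \<Rightarrow> (real \<Rightarrow> real) \<Rightarrow> ereal" where
  "Linf_norm M f = esssup M (\<lambda>x. ereal \<bar>f x\<bar>)"

definition Ik :: "nat \<Rightarrow> real set" where
  "Ik k = {0 ..< (1/2) ^ k}"

definition Ikb :: "nat \<Rightarrow> real set" where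
  "Ikb k = {(1/2) ^ k ..< (1/2) ^ (k - 1)}"

text \<open>Prescribed masses mu(I_k) (index k >= 1; value at 0 unused).\<close>
fun muI :: "nat \<Rightarrow> real" where
  "muI 0 = 1"
| "muI (Suc 0) = 1/2"
| "muI (Suc (Suc k)) = (real k + 1) / (real k + 2) * muI (Suc k)"

fun muIb :: "nat \<Rightarrow> real" where
  "muIb 0 = 0"
| "muIb (Suc 0) = 1/2"
| "muIb (Suc (Suc k)) = 1 / (real k + 2) * muI (Suc k)"

text \<open>Density: 1 off [0,1), constant mu(I_k^b)/|I_k^b| on I_k^b (value at the null point 0 irrelevant).\<close>
definition dens :: "real \<Rightarrow> real" where
  "dens x = (if x < 0 \<or> 1 \<le> x then 1
             else if x = 0 then 0
             else (let k = (THE k. 1 \<le> k \<and> x \<in> Ikb k) in muIb k / (1/2) ^ k))"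

definition mu :: "real measure" where
  "mu = density lborel (\<lambda>x. ennreal (dens x))"

definition alpha :: "nat \<Rightarrow> real" where
  "alpha k = sqrt (1 / real k) * sqrt (measure mu (Ik k))"

definition bfun :: "real \<Rightarrow> real" where
  "bfun x = (\<Sum>k. alpha (Suc k) * haar mu (Ik (Suc k)) x)"

end

theory Submission
  imports Defs "HOL-Real_Asymp.Real_Asymp"
begin

lemma half_pow_pos: "(0::real) < (1/2)^k" by simp

lemma half_pow_Suc: "((1::real)/2)^(Suc k) = (1/2)^k / 2" by simp

lemma Ikb_pos: "1 \<le> j \<Longrightarrow> x \<in> Ikb j \<Longrightarrow> 0 < x \<and> x < 1"
proof -
  assume j: "1 \<le> j" and x: "x \<in> Ikb j"
  have "((1::real)/2)^(j-1) \<le> 1" by (simp add: power_le_one)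
  with x show ?thesis unfolding Ikb_def
    by (auto intro: less_le_trans[OF half_pow_pos])
qed

lemma Ikb_disj: "1 \<le> i \<Longrightarrow> 1 \<le> j \<Longrightarrow> x \<in> Ikb i \<Longrightarrow> x \<in> Ikb j \<Longrightarrow> i = j"
proof (rule ccontr)
  assume i: "1 \<le> i" and j: "1 \<le> j" and xi: "x \<in> Ikb i" and xj: "x \<in> Ikb j" and ne: "i \<noteq> j"
  have gen: "\<And>a b. 1 \<le> a \<Longrightarrow> a < b \<Longrightarrow> x \<in> Ikb a \<Longrightarrow> x \<in> Ikb b \<Longrightarrow> False"
  proof -
    fix a b :: nat assume a: "1 \<le> a" "a < b" "x \<in> Ikb a" "x \<in> Ikb b"
    have "((1::real)/2)^(b-1) \<le> (1/2)^a" by (rule power_decreasing) (use a in auto)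
    moreover have "x < (1/2)^(b-1)" "(1/2)^a \<le> x" using a unfolding Ikb_def by auto
    ultimately show False by linarith
  qed
  from ne have "i < j \<or> j < i" by auto
  then show False using gen i j xi xj by blast
qed

lemma Ikb_exists: assumes "0 < x" "x < (1/2)^k" shows "\<exists>j>k. x \<in> Ikb j"
proof -
  have "((1::real)/2)^k \<le> 1" by (simp add: power_le_one)
  then have "x < 1" using assms(2) by linarith
  obtain n where n: "((1::real)/2)^n < x" using real_arch_pow_inv[OF assms(1), of "1/2"] by auto
  define m where "m = (LEAST n. ((1::real)/2)^n \<le> x)"
  have m1: "((1::real)/2)^m \<le> x" unfolding m_def by (rule LeastI[of _ n]) (use n in auto)
  have mk: "k < m"
  proof (rule ccontr)
    assume "\<not> k < m"
    then have "((1::real)/2)^k \<le> (1/2)^m" by (intro power_decreasing) auto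
    with m1 assms show False by auto
  qed
  have "\<not> ((1::real)/2)^(m-1) \<le> x"
  proof
    assume "((1::real)/2)^(m-1) \<le> x"
    then have "m \<le> m - 1" unfolding m_def by (rule Least_le)
    with mk show False by auto
  qed
  then have "x \<in> Ikb m" using m1 unfolding Ikb_def by auto
  with mk show ?thesis by auto
qed

lemma dens_Ikb: assumes "1 \<le> j" "x \<in> Ikb j" shows "dens x = muIb j / (1/2)^j"
proof -
  from Ikb_pos[OF assms] have x: "0 < x" "x < 1" by auto
  have "(THE k. 1 \<le> k \<and> x \<in> Ikb k) = j"
    by (rule the_equality) (use assms Ikb_disj in auto)
  with x show ?thesis unfolding dens_def by (auto simp: Let_def)
qed

lemma dens_out: "x < 0 \<or> 1 \<le> x \<Longrightarrow> dens x = 1" unfolding dens_def by auto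

lemma muI_pos_formula: "1 \<le> k \<Longrightarrow> muI k = 1 / (2 * real k)"
proof (induction k rule: nat_induct_at_least)
  case base then show ?case by simp
next
  case (Suc n)
  then obtain m where m: "n = Suc m" by (cases n) auto
  show ?case using Suc.IH unfolding m by (simp add: field_simps)
qed

lemma muI_0: "muI 0 = 1" by simp

lemma muIb_tel: "muIb (Suc j) = muI j - muI (Suc j)"
proof (cases j)
  case 0 then show ?thesis by simp
next
  case (Suc m) then show ?thesis by (simp add: field_simps)
qed

lemma muIb_formula: "muIb (Suc (Suc k)) = 1 / (2 * (real k + 1) * (real k + 2))"
proof -
  have "muI (Suc k) = 1/(2*(real k+1))" using muI_pos_formula[of "Suc k"] by simp
  then show ?thesis by (simp only: muIb.simps) (simp add: field_simps)
qed

lemma muIb_nonneg: "0 \<le> muIb j"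
  by (cases j rule: muIb.cases) (auto simp: muI_pos_formula)

lemma muI_nonneg: "0 \<le> muI j"
  by (cases j) (auto simp: muI_pos_formula)

lemma space_mu[simp]: "space mu = UNIV" unfolding mu_def by simp
lemma sets_mu[simp]: "sets mu = sets borel" unfolding mu_def by simp

lemma dens_nonneg: "0 \<le> dens x"
proof -
  consider "x < 0 \<or> 1 \<le> x" | "x = 0" | "0 < x" "x < 1" by linarith
  then show ?thesis
  proof cases
    case 3
    then obtain j where "j > 0" "x \<in> Ikb j" using Ikb_exists[of x 0] by auto
    then show ?thesis using dens_Ikb[of j x] muIb_nonneg[of j] by auto
  qed (auto simp: dens_def)
qed

definition dser :: "real \<Rightarrow> real" where
  "dser x = (\<Sum>j. muIb (Suc j) / (1/2)^(Suc j) * indicator (Ikb (Suc j)) x)"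

lemma dens_dser: "dens x = (if x < 0 \<or> 1 \<le> x then 1 else if x = 0 then 0 else dser x)"
proof -
  consider "x < 0 \<or> 1 \<le> x" | "x = 0" | "0 < x" "x < 1" by linarith
  then show ?thesis
  proof cases
    case 3
    then obtain j where j: "j > 0" "x \<in> Ikb j" using Ikb_exists[of x 0] by auto
    then obtain i where i: "j = Suc i" by (cases j) auto
    have "dser x = (\<Sum>j\<in>{i}. muIb (Suc j) / (1/2)^(Suc j) * indicator (Ikb (Suc j)) x)"
      unfolding dser_def
      by (rule suminf_finite) (use j i Ikb_disj[of _ "Suc i" x] in \<open>auto simp: indicator_def\<close>)
    then show ?thesis using dens_Ikb[of j x] j i 3 by (simp add: indicator_def)
  qed (auto simp: dens_def)
qed

lemma dens_meas[measurable]: "dens \<in> borel_measurable borel"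
proof -
  have "dser \<in> borel_measurable borel" unfolding dser_def Ikb_def by measurable
  then show ?thesis unfolding dens_dser[abs_def] by measurable
qed

lemma emeasure_mu: "A \<in> sets borel \<Longrightarrow> emeasure mu A = (\<integral>\<^sup>+x. ennreal (dens x) * indicator A x \<partial>lborel)"
  unfolding mu_def by (subst emeasure_density) (auto simp: mult.commute)

lemma Ikb_borel[measurable]: "Ikb j \<in> sets borel" unfolding Ikb_def by simp
lemma Ik_borel[measurable]: "Ik j \<in> sets borel" unfolding Ik_def by simp

lemma emeasure_Ikb: assumes "1 \<le> j" shows "emeasure mu (Ikb j) = muIb j"
proof -
  have "emeasure mu (Ikb j) = (\<integral>\<^sup>+x. ennreal (muIb j / (1/2)^j) * indicator (Ikb j) x \<partial>lborel)"
    unfolding emeasure_mu[of "Ikb j", OF Ikb_borel]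
    by (rule nn_integral_cong) (use dens_Ikb[OF assms] in \<open>auto simp: indicator_def\<close>)
  also have "\<dots> = ennreal (muIb j / (1/2)^j) * emeasure lborel (Ikb j)"
    by (rule nn_integral_cmult_indicator) (simp add: Ikb_def)
  also have "emeasure lborel (Ikb j) = ennreal ((1/2)^(j-1) - (1/2)^j)"
    unfolding Ikb_def by (rule emeasure_lborel_Ico) (rule power_decreasing, auto)
  also have "ennreal (muIb j / (1/2)^j) * \<dots> = ennreal (muIb j / (1/2)^j * ((1/2)^(j-1) - (1/2)^j))"
    by (rule ennreal_mult''[symmetric]) (use muIb_nonneg[of j] in simp)
  also have "muIb j / (1/2)^j * ((1/2)^(j-1) - (1/2)^j) = muIb j"
  proof -
    obtain i where i: "j = Suc i" using assms by (cases j) auto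
    show ?thesis unfolding i by (simp add: field_simps)
  qed
  finally show ?thesis .
qed

lemma emeasure_0: "emeasure mu {0} = 0"
proof -
  have "\<And>x. ennreal (dens x) * indicator {0} x = 0" by (auto simp: dens_def indicator_def)
  then show ?thesis by (subst emeasure_mu) auto
qed

lemma null_0: "{0} \<in> null_sets mu" using emeasure_0 by (auto simp: null_sets_def)

lemma AE_ne0: "AE x in mu. x \<noteq> 0"
  by (rule AE_I'[OF null_0]) auto

lemma Ik_decomp: "Ik k = {0} \<union> (\<Union>j. Ikb (Suc (j + k)))"
proof (intro equalityI subsetI)
  fix x assume x: "x \<in> Ik k"
  show "x \<in> {0} \<union> (\<Union>j. Ikb (Suc (j + k)))"
  proof (cases "x = 0")
    case False
    with x have "0 < x" "x < (1/2)^k" unfolding Ik_def by auto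
    then obtain j where "j > k" "x \<in> Ikb j" using Ikb_exists by blast
    then have "x \<in> Ikb (Suc ((j - Suc k) + k))" by (simp add: Suc_diff_Suc)
    then show ?thesis by blast
  qed simp
next
  fix x assume "x \<in> {0} \<union> (\<Union>j. Ikb (Suc (j + k)))"
  then consider "x = 0" | j where "x \<in> Ikb (Suc (j + k))" by blast
  then show "x \<in> Ik k"
  proof cases
    case 2
    have "((1::real)/2)^(j+k) \<le> (1/2)^k" by (rule power_decreasing) auto
    moreover have "x < (1/2)^(j+k)" using 2 unfolding Ikb_def by auto
    ultimately have "x < (1/2)^k" by linarith
    then show ?thesis using Ikb_pos[of "Suc (j+k)" x] 2 unfolding Ik_def by auto
  qed (simp add: Ik_def)
qed

lemma muI_lim: "(\<lambda>n. muI (n + k)) \<longlonglongrightarrow> 0"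
proof -
  have "(\<lambda>n. 1 / (2 * real (n + k))) \<longlonglongrightarrow> 0" by real_asymp
  moreover have "eventually (\<lambda>n. 1 / (2 * real (n + k)) = muI (n + k)) sequentially"
    using eventually_ge_at_top[of 1] by eventually_elim (simp add: muI_pos_formula)
  ultimately show ?thesis by (rule Lim_transform_eventually)
qed

lemma muIb_sums: "(\<lambda>j. muIb (Suc (j + k))) sums muI k"
proof -
  have "(\<lambda>n. muI (n + k) - muI (Suc n + k)) sums (muI (0 + k) - 0)"
    by (rule telescope_sums'[OF muI_lim])
  then show ?thesis by (simp add: muIb_tel)
qed

lemma emeasure_Ik: "emeasure mu (Ik k) = muI k"
proof -
  have disj: "disjoint_family (\<lambda>j. Ikb (Suc (j + k)))"
    unfolding disjoint_family_on_def using Ikb_disj by fastforce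
  have "emeasure mu (Ik k) = emeasure mu {0} + emeasure mu (\<Union>j. Ikb (Suc (j + k)))"
    unfolding Ik_decomp
    by (rule plus_emeasure[symmetric]) (use Ikb_pos in \<open>auto\<close>)
  also have "\<dots> = (\<Sum>j. emeasure mu (Ikb (Suc (j + k))))"
  proof -
    have "range (\<lambda>j. Ikb (Suc (j + k))) \<subseteq> sets mu" by auto
    from suminf_emeasure[OF this disj] show ?thesis by (simp add: emeasure_0)
  qed
  also have "\<dots> = (\<Sum>j. ennreal (muIb (Suc (j + k))))"
    by (simp add: emeasure_Ikb)
  also have "\<dots> = ennreal (muI k)"
    using suminf_ennreal2[OF muIb_nonneg sums_summable[OF muIb_sums]] sums_unique[OF muIb_sums]
    by simp
  finally show ?thesis .
qed

lemma measure_Ik: "measure mu (Ik k) = muI k"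
  unfolding measure_def emeasure_Ik using muI_nonneg by simp

lemma measure_Ikb: "1 \<le> j \<Longrightarrow> measure mu (Ikb j) = muIb j"
  unfolding measure_def using emeasure_Ikb muIb_nonneg by simp

lemma Inf_Ik: "Inf (Ik n) = 0" unfolding Ik_def by (rule cInf_atLeastLessThan) simp
lemma Sup_Ik: "Sup (Ik n) = (1/2)^n" unfolding Ik_def by (rule cSup_atLeastLessThan) simp
lemma lchild_Ik: "lchild (Ik n) = Ik (Suc n)" unfolding lchild_def Inf_Ik Sup_Ik by (simp add: Ik_def)
lemma rchild_Ik: "rchild (Ik n) = Ikb (Suc n)" unfolding rchild_def Inf_Ik Sup_Ik by (simp add: Ikb_def)

definition E :: "nat \<Rightarrow> real \<Rightarrow> real" where
  "E k x = indicator (Ikb (k+2)) x - indicator (Ik (k+2)) x / (real k + 1)"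

lemma alpha_haar: "alpha (Suc k) * haar mu (Ik (Suc k)) x = E k x"
proof -
  have m1: "measure mu (Ik (Suc k)) = 1 / (2 * (real k + 1))" using measure_Ik muI_pos_formula[of "Suc k"] by simp
  have m2: "measure mu (Ik (k+2)) = 1 / (2 * (real k + 2))" using measure_Ik muI_pos_formula[of "k+2"] by simp
  have m3: "measure mu (Ikb (k+2)) = 1 / (2 * (real k + 1) * (real k + 2))"
    using measure_Ikb[of "k+2"] muIb_formula[of k] by (simp add: numeral_2_eq_2)
  have mq: "mQ mu (Ik (Suc k)) = 1 / (2 * (real k + 2)^2)"
  proof -
    have m2': "measure mu (Ik (Suc (Suc k))) = 1 / (2 * (real k + 2))" using m2 by (simp add: numeral_2_eq_2)
    have m3': "measure mu (Ikb (Suc (Suc k))) = 1 / (2 * (real k + 1) * (real k + 2))" using m3 by (simp add: numeral_2_eq_2)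
    show ?thesis unfolding mQ_def lchild_Ik rchild_Ik m1 m2' m3' by (simp add: divide_simps power2_eq_square)
  qed
  have "alpha (Suc k) * sqrt (mQ mu (Ik (Suc k))) = sqrt (1 / (real k + 1)) * sqrt (1 / (2 * (real k + 1))) * sqrt (1 / (2 * (real k + 2)^2))"
    unfolding alpha_def mq measure_Ik muI_pos_formula[of "Suc k", simplified] by (simp add: algebra_simps)
  also have "\<dots> = sqrt (1 / (real k + 1) * (1 / (2 * (real k + 1))) * (1 / (2 * (real k + 2)^2)))"
    by (simp only: real_sqrt_mult)
  also have "1 / (real k + 1) * (1 / (2 * (real k + 1))) * (1 / (2 * (real k + 2)^2)) = (1 / (2 * (real k + 1) * (real k + 2)))^2"
    by (simp add: field_simps power2_eq_square)
  also have "sqrt \<dots> = 1 / (2 * (real k + 1) * (real k + 2))" by simp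
  finally have c: "alpha (Suc k) * sqrt (mQ mu (Ik (Suc k))) = 1 / (2 * (real k + 1) * (real k + 2))" .
  have "alpha (Suc k) * haar mu (Ik (Suc k)) x = (alpha (Suc k) * sqrt (mQ mu (Ik (Suc k)))) *
     (indicator (Ikb (k+2)) x / measure mu (Ikb (k+2)) - indicator (Ik (k+2)) x / measure mu (Ik (k+2)))"
    unfolding haar_def lchild_Ik rchild_Ik by (simp add: numeral_2_eq_2)
  also have "\<dots> = E k x"
  proof -
    have g: "\<And>a b. 1 / (2 * (real k + 1) * (real k + 2)) * (a / (1 / (2 * (real k + 1) * (real k + 2))) - b / (1 / (2 * (real k + 2)))) = a - b / (real k + 1)"
      by (simp add: divide_simps) (simp add: algebra_simps)
    show ?thesis unfolding c m2 m3 E_def by (rule g)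
  qed
  finally show ?thesis .
qed

lemma bfun_E: "bfun x = (\<Sum>k. E k x)"
  unfolding bfun_def alpha_haar ..

lemma E_meas[measurable]: "E k \<in> borel_measurable borel"
  unfolding E_def[abs_def] by measurable

lemma E_support: "E k x \<noteq> 0 \<Longrightarrow> 0 \<le> x \<and> x < (1/2)^(Suc k)"
proof -
  assume "E k x \<noteq> 0"
  then have "x \<in> Ikb (k+2) \<or> x \<in> Ik (k+2)" unfolding E_def by (auto simp: indicator_def)
  moreover have "((1::real)/2)^(k+2) \<le> (1/2)^(Suc k)" by (rule power_decreasing) auto
  ultimately show ?thesis unfolding Ikb_def Ik_def
    by (auto simp: numeral_2_eq_2 intro: less_imp_le[OF less_le_trans[OF half_pow_pos]])
qed

lemma E_abs_le: "\<bar>E k x\<bar> \<le> 1"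
  unfolding E_def by (auto simp: indicator_def field_simps)

lemma mIk2: "measure mu (Ik (Suc (Suc k))) = 1/(2*(real k+2))"
  using measure_Ik[of "Suc (Suc k)"] muI_pos_formula[of "Suc (Suc k)"] by simp
lemma mIkb2: "measure mu (Ikb (Suc (Suc k))) = 1/(2*(real k+1)*(real k+2))"
  using measure_Ikb[of "Suc (Suc k)"] muIb_formula[of k] by simp

lemma fin_Ik: "emeasure mu (Ik k) < \<infinity>" by (subst emeasure_Ik) simp
lemma fin_Ikb: "1 \<le> j \<Longrightarrow> emeasure mu (Ikb j) < \<infinity>" by (subst emeasure_Ikb) simp_all

lemma int_Ik: "integrable mu (indicator (Ik k) :: real \<Rightarrow> real)"
  by (rule integrable_real_indicator, simp, subst emeasure_Ik, simp)
lemma int_Ikb: "1 \<le> j \<Longrightarrow> integrable mu (indicator (Ikb j) :: real \<Rightarrow> real)"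
  by (rule integrable_real_indicator, simp, subst emeasure_Ikb, simp_all)

lemma int_E: "integrable mu (E k)"
  unfolding E_def[abs_def]
  by (rule Bochner_Integration.integrable_diff) (auto intro!: int_Ik int_Ikb integrable_divide_zero)

lemma Ik_Ikb_disj: "x \<in> Ikb (Suc n) \<Longrightarrow> x \<notin> Ik (Suc n)"
  unfolding Ikb_def Ik_def by auto

lemma absE: "\<bar>E k x\<bar> = indicator (Ikb (k+2)) x + indicator (Ik (k+2)) x / (real k + 1)"
  unfolding E_def using Ik_Ikb_disj[of x "Suc k"] by (auto simp: indicator_def numeral_2_eq_2)

lemma integral_absE: "(LINT x|mu. \<bar>E k x\<bar>) = 1 / ((real k + 1) * (real k + 2))"
proof -
  have "(LINT x|mu. \<bar>E k x\<bar>) = measure mu (Ikb (k+2)) + measure mu (Ik (k+2)) / (real k + 1)"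
    unfolding absE using int_Ik int_Ikb[of "k+2"] by (simp add: fin_Ik fin_Ikb)
  also have "\<dots> = 1 / ((real k + 1) * (real k + 2))"
    unfolding numeral_2_eq_2 add_Suc_right add_0_right mIk2 mIkb2
    by (simp add: divide_simps) (simp add: algebra_simps)
  finally show ?thesis .
qed

lemma integral_E: "(LINT x|mu. E k x) = 0"
proof -
  have "(LINT x|mu. E k x) = measure mu (Ikb (k+2)) - measure mu (Ik (k+2)) / (real k + 1)"
    unfolding E_def using int_Ik int_Ikb[of "k+2"] by (simp add: fin_Ik fin_Ikb)
  also have "\<dots> = 0"
    unfolding numeral_2_eq_2 add_Suc_right add_0_right mIk2 mIkb2
    by (simp add: divide_simps) (simp add: algebra_simps)
  finally show ?thesis .
qed

lemma summable_tel: "summable (\<lambda>k. 1 / ((real k + 1) * (real k + 2)))"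
proof -
  have "(\<lambda>n. 1 / (real n + 1) - 1 / (real (Suc n) + 1)) sums (1 / (real 0 + 1) - 0)"
    by (rule telescope_sums') real_asymp
  moreover have "\<And>n. 1 / (real n + 1) - 1 / (real (Suc n) + 1) = 1 / ((real n + 1) * (real n + 2))"
    by (simp add: divide_simps)
  ultimately show ?thesis by (simp add: sums_summable)
qed

lemma E_finite: assumes "x \<noteq> 0" shows "finite {k. E k x \<noteq> 0}"
proof (cases "x < 0")
  case True
  then have "{k. E k x \<noteq> 0} = {}" using E_support by force
  then show ?thesis by simp
next
  case False
  with assms have x: "0 < x" by simp
  obtain n where n: "((1::real)/2)^n < x" using real_arch_pow_inv[OF x, of "1/2"] by auto
  have "{k. E k x \<noteq> 0} \<subseteq> {..<n}"
  proof
    fix k assume "k \<in> {k. E k x \<noteq> 0}"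
    then have "x < (1/2)^(Suc k)" using E_support by auto
    show "k \<in> {..<n}"
    proof (rule ccontr)
      assume "k \<notin> {..<n}"
      then have "((1::real)/2)^(Suc k) \<le> (1/2)^n" by (intro power_decreasing) auto
      with n \<open>x < (1/2)^(Suc k)\<close> show False by linarith
    qed
  qed
  then show ?thesis by (rule finite_subset) simp
qed

lemma summable_Ex: assumes "x \<noteq> 0" "\<And>k. E k x = 0 \<Longrightarrow> f k = 0" shows "summable f"
  by (rule summable_finite[OF E_finite[OF assms(1)]]) (use assms(2) in auto)

lemma pow_ge_nat: "(k + 1) * (k + 2) \<le> (2::nat)^(k+2)"
proof (induction k)
  case 0 then show ?case by simp
next
  case (Suc k)
  have "k + 1 < 2^(k+1)" using less_exp[of "k+1"] by simp
  then show ?case using Suc by (simp add: algebra_simps)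
qed

lemma dens_ge: assumes "x \<noteq> 0" shows "1/2 \<le> dens x"
proof -
  consider "x < 0 \<or> 1 \<le> x" | "0 < x" "x < 1" using assms by linarith
  then show ?thesis
  proof cases
    case 1 then show ?thesis by (simp add: dens_out)
  next
    case 2
    then obtain j where j: "j > 0" "x \<in> Ikb j" using Ikb_exists[of x 0] by auto
    show ?thesis
    proof (cases "j = 1")
      case True then show ?thesis using dens_Ikb[of j x] j by simp
    next
      case False
      then obtain k where k: "j = Suc (Suc k)" using j by (cases j; cases "j - 1") auto
      have p: "(real k + 1) * (real k + 2) \<le> 2^(k+2)"
        using pow_ge_nat[of k] by (metis (mono_tags) of_nat_le_iff of_nat_1 of_nat_add of_nat_mult of_nat_numeral of_nat_power)
      have "dens x = 2^(k+2) / (2 * (real k + 1) * (real k + 2))"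
        using dens_Ikb[of j x] j unfolding k muIb_formula by (simp add: power_one_over divide_simps)
      also have "1/2 \<le> \<dots>"
      proof -
        have pos: "0 < 2 * (real k + 1) * (real k + 2)" by simp
        have eq: "1/2 * (2 * (real k + 1) * (real k + 2)) = (real k + 1) * (real k + 2)" by simp
        have "1/2 * (2 * (real k + 1) * (real k + 2)) \<le> 2^(k+2)" by (subst eq) (rule p)
        then show ?thesis by (simp add: pos_le_divide_eq[OF pos])
      qed
      finally show ?thesis .
    qed
  qed
qed

lemma mu_ge: assumes "A \<in> sets borel" shows "ennreal (1/2) * emeasure lborel A \<le> emeasure mu A"
proof -
  have "ennreal (1/2) * emeasure lborel A = (\<integral>\<^sup>+x. ennreal (1/2) * indicator A x \<partial>lborel)"
    using assms by (simp add: nn_integral_cmult_indicator)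
  also have "\<dots> \<le> (\<integral>\<^sup>+x. ennreal (dens x) * indicator A x \<partial>lborel)"
  proof (rule nn_integral_mono_AE)
    show "AE x in lborel. ennreal (1/2) * indicator A x \<le> ennreal (dens x) * indicator A x"
      using AE_lborel_singleton[of 0]
    proof eventually_elim
      case (elim x)
      have "ennreal (1/2) \<le> ennreal (dens x)" by (rule ennreal_leI) (use elim dens_ge in auto)
      then show ?case by (rule mult_right_mono) simp
    qed
  qed
  also have "\<dots> = emeasure mu A" using emeasure_mu[OF assms] by simp
  finally show ?thesis .
qed

lemma mu_le: assumes "A \<in> sets borel" shows "emeasure mu A \<le> 1 + emeasure lborel A"
proof -
  have "emeasure mu A \<le> emeasure mu (Ik 0 \<union> (A - Ik 0))"
    by (rule emeasure_mono) (use assms in auto)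
  also have "\<dots> \<le> emeasure mu (Ik 0) + emeasure mu (A - Ik 0)"
    by (rule emeasure_subadditive) (use assms in auto)
  also have "emeasure mu (Ik 0) = 1" by (simp add: emeasure_Ik)
  also have "emeasure mu (A - Ik 0) = emeasure lborel (A - Ik 0)"
  proof -
    have "emeasure mu (A - Ik 0) = (\<integral>\<^sup>+x. ennreal (dens x) * indicator (A - Ik 0) x \<partial>lborel)"
      by (rule emeasure_mu) (use assms in auto)
    also have "\<dots> = (\<integral>\<^sup>+x. indicator (A - Ik 0) x \<partial>lborel)"
      by (rule nn_integral_cong) (auto simp: indicator_def Ik_def dens_out)
    finally show ?thesis using assms by simp
  qed
  also have "emeasure lborel (A - Ik 0) \<le> emeasure lborel A"
    by (rule emeasure_mono) (use assms in auto)
  finally show ?thesis by (simp add: add_left_mono)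
qed

lemma two_powr_pos: "0 < (2::real) powr m" by simp

lemma dcube_borel[measurable]: "dcube m J \<in> sets borel" unfolding dcube_def by simp

lemma lborel_dcube: "emeasure lborel (dcube m J) = ennreal (2 powr of_int m)"
  unfolding dcube_def by (subst emeasure_lborel_Ico) (auto simp: algebra_simps)

lemma dcube_pos: "0 < measure mu (dcube m J)"
  and dcube_fin: "emeasure mu (dcube m J) < \<infinity>"
proof -
  have "ennreal (1/2) * ennreal (2 powr of_int m) \<le> emeasure mu (dcube m J)"
    using mu_ge[of "dcube m J"] lborel_dcube by simp
  moreover have "0 < ennreal (1/2) * ennreal (2 powr of_int m)"
    by (auto simp: ennreal_zero_less_mult_iff ennreal_inverse_positive)
  ultimately have pos: "0 < emeasure mu (dcube m J)" by order
  have "emeasure mu (dcube m J) \<le> 1 + ennreal (2 powr of_int m)"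
    using mu_le[of "dcube m J"] lborel_dcube by simp
  also have "\<dots> < \<infinity>" by (simp add: less_top)
  finally show fin: "emeasure mu (dcube m J) < \<infinity>" .
  show "0 < measure mu (dcube m J)"
    using pos fin by (simp add: measure_def enn2real_positive_iff)
qed

lemma dcube_floor: "x \<in> dcube m J \<longleftrightarrow> \<lfloor>x / 2 powr of_int m\<rfloor> = J"
proof -
  have c: "0 < (2::real) powr of_int m" by simp
  show ?thesis unfolding dcube_def floor_eq_iff
    by (simp add: pos_le_divide_eq[OF c] pos_divide_less_eq[OF c] algebra_simps)
qed

lemma lt_floor: "0 < c \<Longrightarrow> z < c * of_int N \<longleftrightarrow> \<lfloor>z / c\<rfloor> < N"
  by (simp add: floor_less_iff pos_divide_less_eq mult.commute)

lemma ge_floor: "0 < c \<Longrightarrow> c * of_int N \<le> z \<longleftrightarrow> N \<le> \<lfloor>z / c\<rfloor>"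
  by (simp add: le_floor_iff pos_le_divide_eq mult.commute)

lemma half_pow_powr: "((1::real)/2)^n = 2 powr (- real n)"
  by (simp add: powr_minus powr_realpow power_one_over inverse_eq_divide)

lemma caseA_split:
  assumes "m \<le> -(int k + 2)"
  obtains r :: nat where "((1::real)/2)^(k+2) = 2 powr of_int m * of_int (2^r)"
    "((1::real)/2)^(k+1) = 2 powr of_int m * of_int (2^(Suc r))"
proof -
  define r where "r = nat (-(int k + 2) - m)"
  have r: "real r = - real k - 2 - real_of_int m" unfolding r_def using assms by simp
  have 1: "((1::real)/2)^(k+2) = 2 powr of_int m * of_int (2^r)"
    unfolding half_pow_powr by (simp add: powr_realpow[symmetric] powr_add[symmetric] r) (rule arg_cong[where f="\<lambda>t. 2 powr t"], simp)
  have 2: "((1::real)/2)^(k+1) = 2 powr of_int m * of_int (2^(Suc r))"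
  proof -
    have "((1::real)/2)^(k+1) = 2 * (1/2)^(k+2)" by simp
    also have "\<dots> = 2 powr of_int m * of_int (2^(Suc r))" unfolding 1 by simp
    finally show ?thesis .
  qed
  show ?thesis using that 1 2 by blast
qed

lemma E_caseA:
  assumes "m \<le> -(int k + 2)" "x \<in> dcube m J" "y \<in> dcube m J"
  shows "E k x = E k y"
proof -
  obtain r :: nat where r1: "((1::real)/2)^(k+2) = 2 powr of_int m * of_int (2^r)"
    and r2: "((1::real)/2)^(k+1) = 2 powr of_int m * of_int (2^(Suc r))"
    using caseA_split[OF assms(1)] by blast
  have c: "0 < (2::real) powr of_int m" by simp
  have z0: "0 \<le> z \<longleftrightarrow> 0 \<le> \<lfloor>z / 2 powr of_int m\<rfloor>" for z :: real
    using ge_floor[OF c, of 0 z] by simp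
  have mem: "(z \<in> Ik (k+2) \<longleftrightarrow> 0 \<le> J \<and> J < 2^r) \<and> (z \<in> Ikb (k+2) \<longleftrightarrow> 2^r \<le> J \<and> J < 2^(Suc r))"
    if z: "z \<in> dcube m J" for z
  proof -
    have fz: "\<lfloor>z / 2 powr of_int m\<rfloor> = J" using z dcube_floor by blast
    show ?thesis unfolding Ik_def Ikb_def
      using lt_floor[OF c, of z "2^r"] ge_floor[OF c, of "2^r" z] lt_floor[OF c, of z "2^Suc r"] z0[of z]
      by (simp add: r1[symmetric] r2[symmetric] fz del: of_int_power power_Suc)
  qed
  show ?thesis unfolding E_def using mem[OF assms(2)] mem[OF assms(3)] by (simp add: indicator_def)
qed

lemma E_caseB:
  assumes "-(int k + 1) \<le> m"
  shows "indicator (dcube m J) x * E k x = (if J = 0 then E k x else 0)"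
proof (cases "E k x = 0")
  case False
  then have x: "0 \<le> x" "x < (1/2)^(Suc k)" using E_support by auto
  have "((1::real)/2)^(Suc k) = 2 powr (- real (Suc k))" by (rule half_pow_powr)
  also have "\<dots> \<le> 2 powr of_int m" using assms by simp
  finally have "x < 2 powr of_int m" using x by simp
  then have "\<lfloor>x / 2 powr of_int m\<rfloor> = 0" using x by (simp add: floor_eq_iff divide_simps)
  then have "x \<in> dcube m J \<longleftrightarrow> J = 0" using dcube_floor by auto
  then show ?thesis by (simp add: indicator_def)
qed simp

lemma intP_B: assumes "-(int k + 1) \<le> m"
  shows "(LINT y|mu. indicator (dcube m J) y * E k y) = 0"
  unfolding E_caseB[OF assms] by (cases "J = 0") (simp_all add: integral_E)

lemma intP_A: assumes "m \<le> -(int k + 2)" "x \<in> dcube m J"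
  shows "(LINT y|mu. indicator (dcube m J) y * E k y) = measure mu (dcube m J) * E k x"
proof -
  have "\<And>y. indicator (dcube m J) y * E k y = indicator (dcube m J) y * E k x"
    using E_caseA[OF assms(1) _ assms(2)] by (auto simp: indicator_def)
  then have "(LINT y|mu. indicator (dcube m J) y * E k y) = (LINT y|mu. indicator (dcube m J) y * E k x)"
    by presburger
  also have "\<dots> = measure mu (dcube m J) * E k x" by simp
  finally show ?thesis .
qed

lemma int_indE: "integrable mu (\<lambda>y. indicator A y * E k y)" if "A \<in> sets borel"
  using integrable_mult_indicator[of A mu "E k"] that int_E by simp

lemma summable_int_indE: assumes "A \<in> sets borel"
  shows "summable (\<lambda>k. LINT y|mu. norm (indicator A y * E k y))"
proof (rule summable_comparison_test'[OF summable_tel])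
  fix k :: nat
  have "(LINT y|mu. norm (indicator A y * E k y)) \<le> (LINT y|mu. \<bar>E k y\<bar>)"
    by (rule integral_mono) (use int_indE[OF assms] int_E in \<open>auto simp: indicator_def\<close>)
  moreover have "0 \<le> (LINT y|mu. norm (indicator A y * E k y))" by simp
  ultimately show "norm (LINT y|mu. norm (indicator A y * E k y)) \<le> 1 / ((real k + 1) * (real k + 2))"
    using integral_absE[of k] by simp
qed

lemma set_int_bfun: assumes "A \<in> sets borel"
  shows "(LINT y:A|mu. bfun y) = (\<Sum>k. LINT y|mu. indicator A y * E k y)"
proof -
  have pw: "indicator A y *\<^sub>R bfun y = (\<Sum>k. indicator A y * E k y)" for y
    unfolding bfun_E by (cases "y \<in> A") auto
  have "(LINT y:A|mu. bfun y) = (LINT y|mu. (\<Sum>k. indicator A y * E k y))"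
    unfolding set_lebesgue_integral_def pw ..
  also have "\<dots> = (\<Sum>k. LINT y|mu. indicator A y * E k y)"
  proof (rule integral_suminf)
    show "AE y in mu. summable (\<lambda>k. norm (indicator A y * E k y))"
      using AE_ne0 by eventually_elim (rule summable_Ex, auto)
  qed (use int_indE[OF assms] summable_int_indE[OF assms] in auto)
  finally show ?thesis .
qed

lemma avg_formula: assumes "x \<in> dcube m J" "x \<noteq> 0"
  shows "bfun x - avg mu bfun (dcube m J) = (\<Sum>k. if -(int k + 1) \<le> m then E k x else 0)"
proof -
  define P where "P = dcube m J"
  define g where "g k = (if -(int k + 1) \<le> m then 0 else E k x)" for k
  have Ps: "P \<in> sets borel" unfolding P_def by simp
  have I: "(LINT y|mu. indicator P y * E k y) = measure mu P * g k" for k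
    unfolding g_def P_def using intP_A[of m k x J] intP_B[of k m J] assms(1) by auto
  have sg: "summable g" by (rule summable_Ex[OF assms(2)]) (simp add: g_def)
  have sE: "summable (\<lambda>k. E k x)" by (rule summable_Ex[OF assms(2)])
  have "avg mu bfun P = (\<Sum>k. measure mu P * g k) / measure mu P"
    unfolding avg_def set_int_bfun[OF Ps] I ..
  also have "\<dots> = suminf g" using suminf_mult[OF sg, of "measure mu P"] dcube_pos[of m J] unfolding P_def by simp
  finally have a: "avg mu bfun P = suminf g" .
  have "bfun x - avg mu bfun P = (\<Sum>k. E k x) - suminf g" unfolding a bfun_E ..
  also have "\<dots> = (\<Sum>k. E k x - g k)" by (rule suminf_diff[OF sE sg])
  also have "(\<lambda>k. E k x - g k) = (\<lambda>k. if -(int k + 1) \<le> m then E k x else 0)"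
    unfolding g_def by auto
  finally show ?thesis unfolding P_def .
qed

lemma Ik_dcube: "Ik n = dcube (- int n) 0"
  unfolding Ik_def dcube_def by (simp add: half_pow_powr)

lemma Ikb_dcube: "Ikb (Suc n) = dcube (- int (Suc n)) 1"
proof -
  have h: "(2::real) powr real_of_int (- int (Suc n)) = (1/2)^(Suc n)" using half_pow_powr[of "Suc n"] by simp
  show ?thesis unfolding Ikb_def dcube_def h by simp
qed

lemma E_on_Ikb: assumes "x \<in> Ikb (k+2)" "k \<le> i" shows "E i x = (if i = k then 1 else 0)"
proof (cases "i = k")
  case True then show ?thesis using assms Ik_Ikb_disj[of x "Suc k"] by (simp add: E_def numeral_2_eq_2)
next
  case False
  show ?thesis
  proof (rule ccontr)
    assume "E i x \<noteq> (if i = k then 1 else 0)"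
    with False have "E i x \<noteq> 0" by simp
    then have x: "x < (1/2)^(Suc i)" using E_support by auto
    have xk: "(1/2)^(k+2) \<le> x" using assms unfolding Ikb_def by auto
    from False assms(2) have "k + 2 \<le> Suc i" by simp
    then have "((1::real)/2)^(Suc i) \<le> (1/2)^(k+2)" by (intro power_decreasing) auto
    with x xk show False by linarith
  qed
qed

lemma mdiff_one: assumes "x \<in> Ikb (k+2)" shows "mdiff mu (Ik (Suc k)) bfun x = 1"
proof -
  have x0: "x \<noteq> 0" using Ikb_pos[of "k+2" x] assms by auto
  have xl: "x \<notin> Ik (Suc (Suc k))" using Ik_Ikb_disj[of x "Suc k"] assms by (simp add: numeral_2_eq_2)
  have xQ: "x \<in> Ik (Suc k)"
    using assms Ikb_pos[of "k+2" x] unfolding Ikb_def Ik_def by (simp add: numeral_2_eq_2)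
  have xr: "x \<in> Ikb (Suc (Suc k))" using assms by (simp add: numeral_2_eq_2)
  have a1: "bfun x - avg mu bfun (Ikb (Suc (Suc k))) = 0"
  proof -
    have "bfun x - avg mu bfun (Ikb (Suc (Suc k))) = (\<Sum>i. if -(int i + 1) \<le> - int (Suc (Suc k)) then E i x else 0)"
      unfolding Ikb_dcube by (rule avg_formula[OF _ x0]) (use xr Ikb_dcube in simp)
    also have "\<dots> = (\<Sum>i. 0)"
      by (rule arg_cong[where f=suminf]) (auto simp: E_on_Ikb[OF assms])
    finally show ?thesis by simp
  qed
  have a2: "bfun x - avg mu bfun (Ik (Suc k)) = 1"
  proof -
    have "bfun x - avg mu bfun (Ik (Suc k)) = (\<Sum>i. if -(int i + 1) \<le> - int (Suc k) then E i x else 0)"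
      unfolding Ik_dcube by (rule avg_formula[OF _ x0]) (use xQ Ik_dcube in simp)
    also have "(\<lambda>i. if -(int i + 1) \<le> - int (Suc k) then E i x else 0) = (\<lambda>i. if i = k then 1 else 0)"
      by (auto simp: E_on_Ikb[OF assms])
    also have "(\<Sum>i. if i = k then (1::real) else 0) = 1"
      using suminf_finite[of "{k}" "\<lambda>i. if i = k then (1::real) else 0"] by simp
    finally show ?thesis .
  qed
  show ?thesis unfolding mdiff_def lchild_Ik rchild_Ik using xl xQ xr a1 a2 by simp
qed

lemma Linf_ge: "1 \<le> Linf_norm mu (mdiff mu (Ik (Suc k)) bfun)"
proof (rule ccontr)
  define f where "f = (\<lambda>x. ereal \<bar>mdiff mu (Ik (Suc k)) bfun x\<bar>)"
  assume "\<not> 1 \<le> Linf_norm mu (mdiff mu (Ik (Suc k)) bfun)"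
  then have lt: "esssup mu f < 1" unfolding Linf_norm_def f_def by simp
  then have meas: "f \<in> borel_measurable mu" using esssup_non_measurable[of f mu] by force
  have "AE x in mu. f x \<le> esssup mu f" by (rule esssup_AE)
  then have "AE x in mu. x \<notin> Ikb (k+2)"
  proof eventually_elim
    case (elim x)
    show ?case
    proof
      assume "x \<in> Ikb (k+2)"
      then have "f x = 1" unfolding f_def using mdiff_one by simp
      with elim lt show False by simp
    qed
  qed
  then have "Ikb (k+2) \<in> null_sets mu" using AE_iff_null_sets[of "Ikb (k+2)" mu] by auto
  then have "emeasure mu (Ikb (k+2)) = 0" by auto
  moreover have "emeasure mu (Ikb (k+2)) = muIb (Suc (Suc k))" using emeasure_Ikb[of "k+2"] by (simp add: numeral_2_eq_2)
  ultimately show False unfolding muIb_formula by simp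
qed

lemma sq_ge: "1 \<le> (a::ereal) \<Longrightarrow> 1 \<le> a^2"
  by (cases a) (auto simp: power2_eq_square intro: order_trans[OF _ mult_mono[of 1 _ 1, simplified]])

lemma part2: "(\<Sum>k. (Linf_norm mu (mdiff mu (Ik (Suc k)) bfun))\<^sup>2 * ereal (measure mu (Ik (Suc k)))) = \<infinity>"
proof -
  define t where "t k = (Linf_norm mu (mdiff mu (Ik (Suc k)) bfun))\<^sup>2 * ereal (measure mu (Ik (Suc k)))" for k
  have mk: "measure mu (Ik (Suc k)) = 1 / (2 * (real k + 1))" for k
    using measure_Ik muI_pos_formula[of "Suc k"] by simp
  have tl: "ereal (1 / (2 * (real k + 1))) \<le> t k" for k
  proof -
    have "ereal (1 / (2 * (real k + 1))) = 1 * ereal (1 / (2 * (real k + 1)))" by simp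
    also have "\<dots> \<le> t k" unfolding t_def mk
      by (rule ereal_mult_right_mono[OF sq_ge[OF Linf_ge]]) simp
    finally show ?thesis .
  qed
  have ns: "\<not> summable (\<lambda>k. 1 / (2 * (real k + 1)))"
  proof
    assume "summable (\<lambda>k. 1 / (2 * (real k + 1)))"
    then have "summable (\<lambda>k. 2 * (1 / (2 * (real k + 1))))" by (rule summable_mult)
    moreover have "(\<lambda>k. 2 * (1 / (2 * (real k + 1)))) = (\<lambda>k. inverse (real (Suc k)))"
      by (auto simp: divide_simps)
    ultimately have "summable (\<lambda>k. inverse (real (Suc k)))" by simp
    then have "summable (\<lambda>n. inverse (real n))" using summable_Suc_iff[of "\<lambda>n. inverse (real n)"] by simp
    then show False using not_summable_harmonic by blast
  qed
  have "(\<Sum>k. ereal (1 / (2 * (real k + 1)))) = \<infinity>"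
    using summable_ereal[of "\<lambda>k. 1 / (2 * (real k + 1))"] ns by force
  moreover have "(\<Sum>k. ereal (1 / (2 * (real k + 1)))) \<le> suminf t"
    by (rule suminf_le_pos) (use tl in auto)
  ultimately show ?thesis unfolding t_def by simp
qed

lemma E_meas_mu[measurable]: "E k \<in> borel_measurable mu"
  using E_meas[of k] measurable_cong_sets[OF sets_mu refl] by blast

lemma bfun_meas: "bfun \<in> borel_measurable mu"
  unfolding bfun_E[abs_def] by measurable

lemma bfun_int: "integrable mu bfun"
proof -
  have "integrable mu (\<lambda>x. \<Sum>k. E k x)"
  proof (rule integrable_suminf)
    show "AE x in mu. summable (\<lambda>k. norm (E k x))"
      using AE_ne0 by eventually_elim (rule summable_Ex, auto)
    show "summable (\<lambda>k. LINT x|mu. norm (E k x))"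
      using summable_tel by (simp add: integral_absE)
  qed (rule int_E)
  then show ?thesis unfolding bfun_E[abs_def] .
qed

lemma dcube_sub_parent: "dcube n j \<subseteq> dcube (n+1) (j div 2)"
proof
  fix x assume x: "x \<in> dcube n j"
  define c where "c = (2::real) powr of_int n"
  have c: "0 < c" unfolding c_def by simp
  have c2: "(2::real) powr of_int (n+1) = 2 * c" unfolding c_def by (simp add: powr_add)
  have jd: "2 * (j div 2) \<le> j" "j + 1 \<le> 2 * (j div 2 + 1)" by presburger+
  then have jd': "real_of_int (j div 2) * (2 * c) \<le> real_of_int j * c"
      "(real_of_int j + 1) * c \<le> (real_of_int (j div 2) + 1) * (2 * c)"
  proof -
    have "real_of_int (2 * (j div 2)) \<le> real_of_int j" using jd(1) by linarith
    then show "real_of_int (j div 2) * (2 * c) \<le> real_of_int j * c" using c by (simp add: mult_right_mono)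
    have "real_of_int (j + 1) \<le> real_of_int (2 * (j div 2 + 1))" using jd(2) by linarith
    then show "(real_of_int j + 1) * c \<le> (real_of_int (j div 2) + 1) * (2 * c)" using c
      by (simp add: mult_right_mono)
  qed
  with x show "x \<in> dcube (n+1) (j div 2)" unfolding dcube_def c2 c_def[symmetric] by auto
qed

lemma dparent_dcube: "dparent (dcube n j) = dcube (n+1) (j div 2)"
proof -
  define c where "c = (2::real) powr of_int n"
  have c: "0 < c" unfolding c_def by simp
  have c2: "(2::real) powr of_int (n+1) = 2 * c" unfolding c_def by (simp add: powr_add)
  have lt: "of_int j * c < (of_int j + 1) * c" using c by (simp add: algebra_simps)
  have D: "dcube n j = {of_int j * c ..< (of_int j + 1) * c}" unfolding dcube_def c_def ..
  have I: "Inf {of_int j * c ..< (of_int j + 1) * c} = of_int j * c" using lt by simp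
  have S: "Sup {of_int j * c ..< (of_int j + 1) * c} = (of_int j + 1) * c" using lt by simp
  have l: "2 * ((of_int j + 1) * c - of_int j * c) = 2 * c" by (simp add: algebra_simps)
  have f: "\<lfloor>of_int j * c / (2 * c)\<rfloor> = j div 2"
    using floor_divide_of_int_eq[of j 2] c by simp
  have "dparent (dcube n j) = {of_int (j div 2) * (2*c) ..< (of_int (j div 2) + 1) * (2*c)}"
    unfolding D dparent_def Let_def I S l f ..
  also have "\<dots> = dcube (n+1) (j div 2)" unfolding dcube_def c2 ..
  finally show ?thesis .
qed

lemma pw_bound: assumes "x \<in> dcube (n+1) J" "x \<noteq> 0"
  shows "ennreal \<bar>bfun x - avg mu bfun (dcube (n+1) J)\<bar> \<le> (\<Sum>i. ennreal (if -(int i + 2) \<le> n then \<bar>E i x\<bar> else 0))"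
proof -
  define u where "u i = (if -(int i + 1) \<le> n + 1 then E i x else 0)" for i
  have eq: "bfun x - avg mu bfun (dcube (n+1) J) = suminf u"
    unfolding u_def by (rule avg_formula[OF assms])
  have su: "summable (\<lambda>i. \<bar>u i\<bar>)" by (rule summable_Ex[OF assms(2)]) (simp add: u_def)
  have au: "\<bar>u i\<bar> = (if -(int i + 2) \<le> n then \<bar>E i x\<bar> else 0)" for i
    unfolding u_def by auto
  have "\<bar>suminf u\<bar> \<le> (\<Sum>i. \<bar>u i\<bar>)" by (rule summable_rabs[OF su])
  then have "ennreal \<bar>suminf u\<bar> \<le> ennreal (\<Sum>i. \<bar>u i\<bar>)" by (rule ennreal_leI)
  also have "\<dots> = (\<Sum>i. ennreal \<bar>u i\<bar>)" by (rule suminf_ennreal2[symmetric]) (use su in auto)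
  finally show ?thesis unfolding eq au .
qed

lemma tail_sums: "(\<lambda>i. if m0 \<le> i then 1 / ((real i + 1) * (real i + 2)) else 0) sums (1 / (real m0 + 1))"
proof -
  define h where "h i = 1 / (real (max i m0) + 1)" for i
  have lim: "h \<longlonglongrightarrow> 0"
  proof -
    have "(\<lambda>i. 1 / (real i + 1)) \<longlonglongrightarrow> 0" by real_asymp
    moreover have "eventually (\<lambda>i. 1 / (real i + 1) = h i) sequentially"
      using eventually_ge_at_top[of m0] by eventually_elim (simp add: h_def max_def)
    ultimately show ?thesis by (rule Lim_transform_eventually)
  qed
  have "(\<lambda>i. h i - h (Suc i)) sums (h 0 - 0)" by (rule telescope_sums'[OF lim])
  moreover have "h i - h (Suc i) = (if m0 \<le> i then 1 / ((real i + 1) * (real i + 2)) else 0)" for i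
    unfolding h_def by (auto simp: max_def divide_simps)
  moreover have "h 0 = 1 / (real m0 + 1)" unfolding h_def by simp
  ultimately show ?thesis by simp
qed

lemma nn_int_absE: "(\<integral>\<^sup>+x. ennreal \<bar>E k x\<bar> \<partial>mu) = ennreal (1 / ((real k + 1) * (real k + 2)))"
  using nn_integral_eq_integral[of mu "\<lambda>x. \<bar>E k x\<bar>"] int_E[of k] integral_absE[of k] by simp

lemma bmo_j0: "(\<integral>\<^sup>+x. (\<Sum>i. ennreal (if -(int i + 2) \<le> n then \<bar>E i x\<bar> else 0)) \<partial>mu)
   = ennreal (1 / (real (nat (-(n+2))) + 1))"
proof -
  define m0 where "m0 = nat (-(n+2))"
  have S: "(-(int i + 2) \<le> n) \<longleftrightarrow> m0 \<le> i" for i unfolding m0_def by auto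
  have "(\<integral>\<^sup>+x. (\<Sum>i. ennreal (if -(int i + 2) \<le> n then \<bar>E i x\<bar> else 0)) \<partial>mu)
      = (\<Sum>i. (\<integral>\<^sup>+x. ennreal (if -(int i + 2) \<le> n then \<bar>E i x\<bar> else 0) \<partial>mu))"
    by (rule nn_integral_suminf) measurable
  also have "\<dots> = (\<Sum>i. ennreal (if m0 \<le> i then 1 / ((real i + 1) * (real i + 2)) else 0))"
  proof (rule arg_cong[where f=suminf], rule ext)
    fix i
    show "(\<integral>\<^sup>+x. ennreal (if -(int i + 2) \<le> n then \<bar>E i x\<bar> else 0) \<partial>mu) =
      ennreal (if m0 \<le> i then 1 / ((real i + 1) * (real i + 2)) else 0)"
    proof (cases "m0 \<le> i")
      case True
      then have "-(int i + 2) \<le> n" using S by blast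
      then show ?thesis using True nn_int_absE[of i] by simp
    next
      case False
      then have "\<not> -(int i + 2) \<le> n" using S by blast
      then show ?thesis using False by simp
    qed
  qed
  also have "\<dots> = ennreal (1 / (real m0 + 1))"
    using suminf_ennreal2[OF _ sums_summable[OF tail_sums]] sums_unique[OF tail_sums] by simp
  finally show ?thesis unfolding m0_def .
qed

lemma meas_j0: "ennreal (1 / (real (nat (-(n+2))) + 1)) \<le> 4 * emeasure mu (dcube n 0)"
proof (cases "0 \<le> n")
  case True
  have "Ik 0 \<subseteq> dcube n 0"
  proof -
    have "(1::real) \<le> 2 powr of_int n" using True by (intro ge_one_powr_ge_zero) auto
    then show ?thesis unfolding Ik_def dcube_def by auto
  qed
  then have b: "1 \<le> emeasure mu (dcube n 0)" using emeasure_mono[of "Ik 0" "dcube n 0" mu] emeasure_Ik[of 0] by simp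
  have a: "ennreal (1 / (real (nat (-(n+2))) + 1)) \<le> 1" by (simp add: divide_le_eq_1)
  have c: "1 * emeasure mu (dcube n 0) \<le> 4 * emeasure mu (dcube n 0)"
    by (rule mult_right_mono) simp_all
  from c have c': "emeasure mu (dcube n 0) \<le> 4 * emeasure mu (dcube n 0)" by simp
  from order_trans[OF order_trans[OF a b] c'] show ?thesis .
next
  case False
  define N where "N = nat (-n)"
  have N: "1 \<le> N" "n = - int N" unfolding N_def using False by auto
  have "dcube n 0 = Ik N" unfolding Ik_dcube N(2) by simp
  then have em: "emeasure mu (dcube n 0) = ennreal (1 / (2 * real N))"
    using emeasure_Ik[of N] muI_pos_formula[OF N(1)] by simp
  have m0: "nat (-(n+2)) = N - 2" unfolding N(2) by simp
  have "real N \<le> 2 * (real (N - 2) + 1)" using N(1) by (cases "N \<le> 2") auto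
  then have le: "1 / (real (N - 2) + 1) \<le> 4 * (1 / (2 * real N))" using N(1) by (simp add: divide_simps)
  have "ennreal (1 / (real (nat (-(n+2))) + 1)) \<le> ennreal (4 * (1 / (2 * real N)))"
    unfolding m0 by (rule ennreal_leI[OF le])
  also have "\<dots> = 4 * emeasure mu (dcube n 0)" unfolding em
    by (subst ennreal_mult) simp_all
  finally show ?thesis .
qed

lemma F_le1: assumes "j \<noteq> 0" "x \<in> dcube n j"
  shows "(\<Sum>i. ennreal (if -(int i + 2) \<le> n then \<bar>E i x\<bar> else 0)) \<le> 1"
proof -
  define i0 where "i0 = nat (-n-2)"
  have z: "ennreal (if -(int i + 2) \<le> n then \<bar>E i x\<bar> else 0) = 0" if "i \<noteq> i0" for i
  proof (rule ccontr)
    assume "ennreal (if -(int i + 2) \<le> n then \<bar>E i x\<bar> else 0) \<noteq> 0"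
    then have c: "-(int i + 2) \<le> n" and "E i x \<noteq> 0" by (auto split: if_splits)
    then have x: "0 \<le> x" "x < (1/2)^(Suc i)" using E_support by auto
    have c0: "0 < (2::real) powr of_int n" by simp
    have fl: "\<lfloor>x / 2 powr of_int n\<rfloor> = j" using assms(2) dcube_floor by blast
    have "0 \<le> x / 2 powr of_int n" using x c0 by simp
    then have "0 \<le> j" using fl by linarith
    with assms(1) have "1 \<le> j" by simp
    then have "1 \<le> x / 2 powr of_int n" using fl by linarith
    then have "2 powr of_int n \<le> x" using c0 by (simp add: pos_le_divide_eq)
    also have "x < 2 powr (- real (Suc i))" using x half_pow_powr[of "Suc i"] by simp
    finally have "real_of_int n < - real (Suc i)" by simp
    then have "n < - int (Suc i)" by linarith
    with c have "n = -(int i + 2)" by simp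
    then have "i = i0" unfolding i0_def by simp
    with that show False by simp
  qed
  have "(\<Sum>i. ennreal (if -(int i + 2) \<le> n then \<bar>E i x\<bar> else 0))
      = (\<Sum>i\<in>{i0}. ennreal (if -(int i + 2) \<le> n then \<bar>E i x\<bar> else 0))"
    by (rule suminf_finite) (simp, blast intro: z)
  also have "\<dots> \<le> 1" using E_abs_le[of i0 x] by (simp add: ennreal_leI)
  finally show ?thesis .
qed

lemma bmo_bound: "(\<integral>\<^sup>+x\<in>dcube n j. ennreal \<bar>bfun x - avg mu bfun (dparent (dcube n j))\<bar> \<partial>mu) \<le> 4 * emeasure mu (dcube n j)"
proof -
  define F where "F x = (\<Sum>i. ennreal (if -(int i + 2) \<le> n then \<bar>E i x\<bar> else 0))" for x
  have pw: "AE x in mu. ennreal \<bar>bfun x - avg mu bfun (dparent (dcube n j))\<bar> * indicator (dcube n j) x \<le> F x * indicator (dcube n j) x"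
    using AE_ne0
  proof eventually_elim
    case (elim x)
    show ?case
    proof (cases "x \<in> dcube n j")
      case True
      then have "x \<in> dcube (n+1) (j div 2)" using dcube_sub_parent by blast
      from pw_bound[OF this elim] True show ?thesis unfolding dparent_dcube F_def by simp
    qed simp
  qed
  have "(\<integral>\<^sup>+x\<in>dcube n j. ennreal \<bar>bfun x - avg mu bfun (dparent (dcube n j))\<bar> \<partial>mu) \<le> (\<integral>\<^sup>+x. F x * indicator (dcube n j) x \<partial>mu)"
    by (rule nn_integral_mono_AE[OF pw])
  also have "\<dots> \<le> 4 * emeasure mu (dcube n j)"
  proof (cases "j = 0")
    case True
    have "(\<integral>\<^sup>+x. F x * indicator (dcube n j) x \<partial>mu) \<le> (\<integral>\<^sup>+x. F x \<partial>mu)"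
      by (rule nn_integral_mono) (auto simp: indicator_def)
    also have "\<dots> = ennreal (1 / (real (nat (-(n+2))) + 1))" unfolding F_def by (rule bmo_j0)
    also have "\<dots> \<le> 4 * emeasure mu (dcube n j)" unfolding True by (rule meas_j0)
    finally show ?thesis .
  next
    case False
    have "(\<integral>\<^sup>+x. F x * indicator (dcube n j) x \<partial>mu) \<le> (\<integral>\<^sup>+x. indicator (dcube n j) x \<partial>mu)"
    proof (rule nn_integral_mono)
      fix x
      show "F x * indicator (dcube n j) x \<le> indicator (dcube n j) x"
      proof (cases "x \<in> dcube n j")
        case True
        then have "F x \<le> 1" unfolding F_def by (rule F_le1[OF False])
        then show ?thesis using True by simp
      qed simp
    qed
    also have "\<dots> = emeasure mu (dcube n j)" by simp
    also have "\<dots> \<le> 4 * emeasure mu (dcube n j)"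
      using mult_right_mono[of 1 4 "emeasure mu (dcube n j)"] by simp
    finally show ?thesis .
  qed
  finally show ?thesis .
qed

lemma bmo_ratio: assumes "Q \<in> dyadic"
  shows "(\<integral>\<^sup>+ x\<in>Q. ennreal \<bar>bfun x - avg mu bfun (dparent Q)\<bar> \<partial>mu) / emeasure mu Q \<le> 4"
proof -
  obtain n j where Q: "Q = dcube n j" using assms unfolding dyadic_def by auto
  have pos: "0 < emeasure mu Q"
  proof -
    have "emeasure mu Q = ennreal (measure mu Q)"
      by (rule emeasure_eq_ennreal_measure) (use dcube_fin[of n j] Q in auto)
    then show ?thesis using dcube_pos[of n j] Q by simp
  qed
  show ?thesis
    by (rule divide_le_posI_ennreal[OF pos]) (use bmo_bound[of n j] in \<open>simp add: Q mult.commute\<close>)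
qed

lemma part1: "in_BMO mu bfun"
  unfolding in_BMO_def
proof (intro conjI ballI)
  show "bfun \<in> borel_measurable mu" by (rule bfun_meas)
next
  fix Q assume "Q \<in> dyadic"
  then obtain n j where Q: "Q = dcube n j" unfolding dyadic_def by auto
  show "set_integrable mu Q bfun" unfolding set_integrable_def Q
    by (rule integrable_mult_indicator[OF _ bfun_int]) simp
next
  have "(SUP Q\<in>dyadic. (\<integral>\<^sup>+ x\<in>Q. ennreal \<bar>bfun x - avg mu bfun (dparent Q)\<bar> \<partial>mu) / emeasure mu Q) \<le> 4"
    by (rule SUP_least) (rule bmo_ratio)
  also have "(4::ennreal) < \<infinity>" by simp
  finally show "(SUP Q\<in>dyadic. (\<integral>\<^sup>+ x\<in>Q. ennreal \<bar>bfun x - avg mu bfun (dparent Q)\<bar> \<partial>mu) / emeasure mu Q) < \<infinity>" .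
qed

theorem mainTheorem6:
  shows "in_BMO mu bfun \<and>
    (\<Sum>k. (Linf_norm mu (mdiff mu (Ik (Suc k)) bfun))\<^sup>2 * ereal (measure mu (Ik (Suc k)))) = \<infinity>"
  using part1 part2 by simp

end
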